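(* Let $v\equiv 9\pmod{18}$ and let $(\mathbb{Z}_v,\mathcal{B})$ be a cyclic $\mathrm{STS}(v)$ (with cyclic automorphism $i\mapsto i+1 \bmod v$). Then $\mathcal{B}$ has a full orbit of Type $3$.
   Context: A Steiner triple system $\mathrm{STS}(v)$ is a pair $(X,\mathcal{B})$ with $|X|=v$ and $\mathcal{B}$ a collection of 3-subsets of $X$ such that every 2-subset lies in exactly one block. It is cyclic if (after relabeling) $X=\mathbb{Z}_v$ and the map $\alpha: i\mapsto i+1 \pmod v$ maps blocks to blocks. The blocks are then partitioned into orbits under the group generated by $\alpha$; an orbit with $v$ blocks is a full orbit. For $v\equiv 3\pmod 6$ there is, besides full orbits, exactly one short orbit, namely the orbit of $\{0,v/3,2v/3\}$, of size $v/3$. When $3\mid v$, an orbit is of Type $i$ ($i=1,2,3$) if every block in it contains elements of exactly $i$ distinct residue classes modulo $3$ (this is the same for all blocks of an orbit). *)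

theory Defs
  imports Main
begin

text \<open>Points of Z_v are represented by the naturals 0..<v; blocks are 3-subsets.\<close>

definition is_STS :: "nat \<Rightarrow> nat set set \<Rightarrow> bool" where
  "is_STS v \<B> \<longleftrightarrow>
     (\<forall>B\<in>\<B>. B \<subseteq> {0..<v} \<and> card B = 3) \<and>
     (\<forall>P. P \<subseteq> {0..<v} \<and> card P = 2 \<longrightarrow> (\<exists>!B. B \<in> \<B> \<and> P \<subseteq> B))"

definition shift :: "nat \<Rightarrow> nat \<Rightarrow> nat set \<Rightarrow> nat set" where
  "shift v k B = (\<lambda>i. (i + k) mod v) ` B"

definition is_cyclic_STS :: "nat \<Rightarrow> nat set set \<Rightarrow> bool" where
  "is_cyclic_STS v \<B> \<longleftrightarrow> is_STS v \<B> \<and> (\<forall>B\<in>\<B>. shift v 1 B \<in> \<B>)"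

definition block_orbit :: "nat \<Rightarrow> nat set \<Rightarrow> nat set set" where
  "block_orbit v B = {shift v k B | k. k < v}"

definition full_orbit :: "nat \<Rightarrow> nat set \<Rightarrow> bool" where
  "full_orbit v B \<longleftrightarrow> card (block_orbit v B) = v"

text \<open>Type i: the block meets exactly i residue classes mod 3 (invariant on the orbit when 3 divides v).\<close>
definition block_type :: "nat set \<Rightarrow> nat" where
  "block_type B = card ((\<lambda>x. x mod 3) ` B)"

end

theory Submission
  imports Defs "HOL-Number_Theory.Cong"
begin

lemma card_res:
  assumes "i < 3" "v = 3 * a"
  shows "card {x\<in>{0..<v}. x mod 3 = i} = a"
proof -
  have "{x\<in>{0..<v}. x mod 3 = i} = (\<lambda>k. 3*k+i) ` {0..<a}"
  proof (rule set_eqI, rule iffI)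
    fix x assume "x \<in> {x\<in>{0..<v}. x mod 3 = i}"
    then have "x = 3*(x div 3) + i" "x div 3 < a" using assms by auto
    then show "x \<in> (\<lambda>k. 3*k+i) ` {0..<a}" by force
  next
    fix x assume "x \<in> (\<lambda>k. 3*k+i) ` {0..<a}"
    then show "x \<in> {x\<in>{0..<v}. x mod 3 = i}" using assms by auto
  qed
  moreover have "inj_on (\<lambda>k. 3*k+i) {0..<a}" by (auto simp: inj_on_def)
  ultimately show ?thesis by (simp add: card_image)
qed

lemma odd_prod_type3:
  assumes "card B = 3"
    and "odd (card {x\<in>B. x mod 3 = 0} * card {x\<in>B. x mod 3 = (1::nat)})"
  shows "block_type B = 3"
proof -
  have fin: "finite B" using assms(1) card.infinite by fastforce
  let ?B0 = "{x\<in>B. x mod 3 = 0}" and ?B1 = "{x\<in>B. x mod 3 = (1::nat)}" and ?B2 = "{x\<in>B. x mod 3 = (2::nat)}"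
  have eq: "B = (?B0 \<union> ?B1) \<union> ?B2" by auto
  have "card ((?B0 \<union> ?B1) \<union> ?B2) = card (?B0 \<union> ?B1) + card ?B2"
    by (rule card_Un_disjoint) (use fin in auto)
  also have "card (?B0 \<union> ?B1) = card ?B0 + card ?B1"
    by (rule card_Un_disjoint) (use fin in auto)
  finally have "card B = card ?B0 + card ?B1 + card ?B2" using eq by simp
  hence c: "card ?B0 + card ?B1 + card ?B2 = 3" using assms(1) by simp
  have o: "odd (card ?B0)" "odd (card ?B1)" using assms(2) by auto
  have "card ?B0 = 1" "card ?B1 = 1" "card ?B2 = 1"
    using c o by (auto simp: odd_pos) presburger+
  hence ne: "?B0 \<noteq> {}" "?B1 \<noteq> {}" "?B2 \<noteq> {}" by (metis card.empty zero_neq_one)+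
  have "(\<lambda>x. x mod 3) ` B = {0,1,2::nat}"
  proof
    show "(\<lambda>x. x mod 3) ` B \<subseteq> {0,1,2}" by auto
    show "{0,1,2} \<subseteq> (\<lambda>x. x mod 3) ` B" using ne by (auto simp: image_iff) (metis dvd_imp_mod_0, metis)
  qed
  thus ?thesis by (simp add: block_type_def)
qed


lemma shift_compose:
  "shift v a (shift v b B) = shift v (a+b) B"
  unfolding shift_def image_image by (simp add: mod_add_right_eq add.assoc add.commute add.left_commute)

lemma shift_mod_eq: "shift v a B = shift v (a mod v) B"
  unfolding shift_def by (simp add: mod_add_right_eq)

lemma shift_0: assumes "B \<subseteq> {0..<v}" shows "shift v 0 B = B"
proof -
  have "\<And>i. i \<in> B \<Longrightarrow> i mod v = i" using assms by auto
  thus ?thesis unfolding shift_def by (simp add: image_cong)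
qed

lemma nat_mod_cancel:
  fixes a c v :: nat
  assumes "(a + c) mod v = a mod v"
  shows "v dvd c"
proof -
  have "[a + c = a + 0] (mod v)" using assms by (simp add: cong_def)
  hence "[c = 0] (mod v)" by (rule cong_add_lcancel_nat[THEN iffD1])
  thus ?thesis by (simp add: cong_0_iff)
qed

lemma no_fix:
  assumes sub: "B \<subseteq> {0..<v}" and c3: "card B = 3" and t3: "block_type B = 3"
    and v9: "9 dvd v" and d: "0 < d" "d < v" and fx: "shift v d B = B"
  shows False
proof -
  define f where "f = (\<lambda>i. (i + d) mod v)"
  have fin: "finite B" using c3 card.infinite by fastforce
  have fB: "f ` B = B" using fx by (simp add: shift_def f_def)
  have inj: "inj_on f B"
  proof (rule inj_onI)
    fix x y assume "x \<in> B" "y \<in> B" "f x = f y"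
    hence "x < v" "y < v" "(x + d) mod v = (y + d) mod v" using sub by (auto simp: f_def)
    hence "[x = y] (mod v)" by (metis cong_add_rcancel_nat cong_def)
    thus "x = y" using \<open>x < v\<close> \<open>y < v\<close> by (simp add: cong_def)
  qed
  have "sum id B = sum (id \<circ> f) B" using sum.reindex[OF inj, of id] fB by simp
  hence "sum id B mod v = sum f B mod v" by simp
  also have "sum f B mod v = (\<Sum>i\<in>B. i + d) mod v"
    unfolding f_def by (simp add: mod_sum_eq)
  also have "(\<Sum>i\<in>B. i + d) = sum id B + 3 * d" using c3 by (simp add: sum.distrib)
  finally have "v dvd 3 * d" using nat_mod_cancel by metis
  then obtain m where m: "3 * d = v * m" by blast
  have "3 dvd d"
  proof -
    obtain w where "v = 9 * w" using v9 by blast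
    hence "d = 3 * w * m" using m by simp
    thus ?thesis by simp
  qed
  obtain x where x: "x \<in> B" using c3 by fastforce
  have fxB: "f x \<in> B" using fB x by blast
  have "f x mod 3 = x mod 3"
  proof -
    have "3 dvd v" using v9 by (auto elim!: dvdE)
    hence "f x mod 3 = (x + d) mod 3" unfolding f_def by (simp add: mod_mod_cancel)
    moreover obtain e where "d = 3 * e" using \<open>3 dvd d\<close> by blast
    ultimately show ?thesis by simp
  qed
  moreover have "f x \<noteq> x"
  proof
    assume "f x = x"
    hence "(x + d) mod v = x mod v" using sub x by (auto simp: f_def)
    hence "v dvd d" using nat_mod_cancel by blast
    thus False using d by (simp add: nat_dvd_not_less)
  qed
  moreover have "inj_on (\<lambda>x. x mod 3) B"
    using t3 c3 fin by (simp add: block_type_def eq_card_imp_inj_on)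
  ultimately show False using x fxB by (metis inj_onD)
qed


lemma shift_inj_aux:
  assumes sub: "B \<subseteq> {0..<v}" and c3: "card B = 3" and t3: "block_type B = 3"
    and v9: "9 dvd v" and kl: "k < l" "l < v" and eq: "shift v k B = shift v l B"
  shows False
proof -
  have "shift v (v-k) (shift v k B) = shift v (v-k) (shift v l B)" using eq by simp
  hence "shift v (v - k + k) B = shift v (v - k + l) B" by (simp add: shift_compose)
  hence "shift v ((v - k + k) mod v) B = shift v ((v - k + l) mod v) B" by (metis shift_mod_eq)
  moreover have "(v - k + k) mod v = 0" using kl by simp
  moreover have "(v - k + l) mod v = l - k"
  proof -
    have "v - k + l = (l - k) + v" using kl by simp
    moreover have "(l - k) < v" using kl by simp
    ultimately show ?thesis by (metis mod_add_self2 mod_less)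
  qed
  ultimately have "shift v (l - k) B = B" using shift_0[OF sub] by simp
  thus False by (rule no_fix[OF sub c3 t3 v9, rotated 2]) (use kl in auto)
qed

theorem mainTheorem3:
  fixes v :: nat and \<B> :: "nat set set"
  assumes "v mod 18 = 9"
    and "is_cyclic_STS v \<B>"
  shows "\<exists>B\<in>\<B>. full_orbit v B \<and> block_type B = 3"
proof -
  have blk: "\<And>B. B \<in> \<B> \<Longrightarrow> B \<subseteq> {0..<v} \<and> card B = 3"
    and uniq: "\<And>P. P \<subseteq> {0..<v} \<Longrightarrow> card P = 2 \<Longrightarrow> \<exists>!B. B \<in> \<B> \<and> P \<subseteq> B"
    using assms(2) unfolding is_cyclic_STS_def is_STS_def by auto
  define a where "a = v div 3"
  define t where "t = v div 18"
  have vt: "v = 18 * t + 9" using assms(1) unfolding t_def by presburger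
  have va: "v = 3 * a" unfolding a_def using vt by simp
  have aodd: "odd a" unfolding a_def using vt by simp
  have v9: "9 dvd v" using vt by presburger
  have finB: "finite \<B>"
  proof (rule finite_subset)
    show "\<B> \<subseteq> Pow {0..<v}" using blk by auto
  qed simp
  define P where "P = (\<lambda>B. {x\<in>B. x mod 3 = (0::nat)} \<times> {x\<in>B. x mod 3 = (1::nat)})"
  define S where "S = {x\<in>{0..<v}. x mod 3 = (0::nat)} \<times> {x\<in>{0..<v}. x mod 3 = (1::nat)}"
  have cS: "card S = a * a" unfolding S_def card_cartesian_product
    using card_res[OF _ va] by simp
  have SU: "S = (\<Union>B\<in>\<B>. P B)"
  proof
    show "S \<subseteq> (\<Union>B\<in>\<B>. P B)"
    proof
      fix z assume "z \<in> S"
      then obtain x y where z: "z = (x,y)" "x < v" "y < v" "x mod 3 = 0" "y mod 3 = 1"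
        unfolding S_def by auto
      hence "x \<noteq> y" by auto
      hence "card {x,y} = 2" by simp
      moreover have "{x,y} \<subseteq> {0..<v}" using z by auto
      ultimately obtain B where "B \<in> \<B>" "{x,y} \<subseteq> B" using uniq by blast
      thus "z \<in> (\<Union>B\<in>\<B>. P B)" using z unfolding P_def by auto
    qed
    show "(\<Union>B\<in>\<B>. P B) \<subseteq> S" unfolding P_def S_def using blk by fastforce
  qed
  have disj: "\<forall>B\<in>\<B>. \<forall>B'\<in>\<B>. B \<noteq> B' \<longrightarrow> P B \<inter> P B' = {}"
  proof (intro ballI impI)
    fix B B' assume BB: "B \<in> \<B>" "B' \<in> \<B>" "B \<noteq> B'"
    show "P B \<inter> P B' = {}"
    proof (rule ccontr)
      assume "P B \<inter> P B' \<noteq> {}"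
      then obtain x y where "(x,y) \<in> P B" "(x,y) \<in> P B'" by auto
      hence xy: "x \<in> B" "y \<in> B" "x \<in> B'" "y \<in> B'" "x mod 3 = 0" "y mod 3 = 1"
        unfolding P_def by auto
      hence "x \<noteq> y" by auto
      hence "card {x,y} = 2" by simp
      moreover have "{x,y} \<subseteq> {0..<v}" using xy(1,2) blk[OF BB(1)] by auto
      ultimately have "\<exists>!B. B \<in> \<B> \<and> {x,y} \<subseteq> B" by (rule uniq[rotated])
      then obtain C where C: "\<And>D. D \<in> \<B> \<and> {x,y} \<subseteq> D \<Longrightarrow> D = C" by (metis ex1E)
      have "B = C" by (rule C) (use xy BB in simp)
      moreover have "B' = C" by (rule C) (use xy BB in simp)
      ultimately show False using BB(3) by simp
    qed
  qed
  have finP: "\<forall>B\<in>\<B>. finite (P B)"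
    unfolding P_def using blk by (auto intro: finite_subset)
  have "card S = (\<Sum>B\<in>\<B>. card (P B))"
    unfolding SU by (rule card_UN_disjoint[OF finB finP disj])
  moreover have "odd (card S)" using cS aodd by simp
  ultimately have "odd (\<Sum>B\<in>\<B>. card (P B))" by metis
  then obtain B where B: "B \<in> \<B>" "odd (card (P B))"
    by (metis dvd_sum)
  have sub: "B \<subseteq> {0..<v}" and c3: "card B = 3" using blk B by auto
  have t3: "block_type B = 3"
    using odd_prod_type3[OF c3] B(2) unfolding P_def card_cartesian_product by simp
  have "block_orbit v B = (\<lambda>k. shift v k B) ` {..<v}"
    unfolding block_orbit_def by auto
  moreover have "inj_on (\<lambda>k. shift v k B) {..<v}"
  proof (rule inj_onI)
    fix k l assume kl: "k \<in> {..<v}" "l \<in> {..<v}" "shift v k B = shift v l B"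
    show "k = l"
    proof (rule linorder_cases[of k l])
      assume "k < l" thus ?thesis using shift_inj_aux[OF sub c3 t3 v9, of k l] kl by auto
    next
      assume "l < k" thus ?thesis using shift_inj_aux[OF sub c3 t3 v9, of l k] kl by auto
    qed
  qed
  ultimately have "full_orbit v B" unfolding full_orbit_def by (simp add: card_image)
  thus ?thesis using B t3 by blast
qed

end
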